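(* Let $(\mathcal{X},d)$ be a finite metric space, $\mu\in\mathcal{M}_+(\mathcal{X})$, $t>0$, $s\in(0,1]$, and let $\hat\mu_{t,s}$ be the Poisson-model estimator. Then for every $p\ge1$ and $C>0$, $$\mathbb{E}\big[\mathrm{KR}^p_{p,C}(\hat\mu_{t,s},\mu)\big]\le\frac{C^p}{2}\Big(2(1-s)\mathbb{M}(\mu)+\frac{s}{\sqrt t}\sum_{x\in\mathcal{X}}\sqrt{\mu(x)}\Big).$$
   Context: $\mathcal{M}_+(\mathcal{X})$ is the set of non-negative measures on the finite set $\mathcal{X}$, $\mathbb{M}(\mu)=\sum_x\mu(x)$. For $\mu,\nu\in\mathcal{M}_+(\mathcal{X})$, $\Pi_\le(\mu,\nu)$ is the set of $\pi\in\mathcal{M}_+(\mathcal{X}\times\mathcal{X})$ with $\sum_{x'}\pi(x,x')\le\mu(x)$ and $\sum_x\pi(x,x')\le\nu(x')$ for all $x,x'$, and the $(p,C)$-Kantorovich–Rubinstein distance is $\mathrm{KR}_{p,C}(\mu,\nu)=\big(\min_{\pi\in\Pi_\le(\mu,\nu)}\sum_{x,x'}d^p(x,x')\pi(x,x')+C^p(\frac{\mathbb{M}(\mu)+\mathbb{M}(\nu)}{2}-\mathbb{M}(\pi))\big)^{1/p}$. Poisson model: let $(P_x)_{x\in\mathcal{X}}$ be independent with $P_x\sim\mathrm{Poi}(t\mu(x))$ and, independently, $(B_x)_{x\in\mathcal{X}}$ independent with $B_x\sim\mathrm{Ber}(s)$; the estimator is $\hat\mu_{t,s}=\frac{1}{st}\sum_{x\in\mathcal{X}}B_xP_x\delta_x$.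 *)

theory Defs
  imports "HOL-Probability.Probability"
begin

text \<open>Finite metric space: a type of class metric_space and finite, distance dist.
  Non-negative measures on it are functions mu :: 'a => real with mu x >= 0.\<close>

definition mass :: "('b::finite \<Rightarrow> real) \<Rightarrow> real" where
  "mass \<mu> = (\<Sum>x\<in>UNIV. \<mu> x)"

definition subcouplings :: "('a::finite \<Rightarrow> real) \<Rightarrow> ('a \<Rightarrow> real) \<Rightarrow> ('a \<times> 'a \<Rightarrow> real) set" where
  "subcouplings \<mu> \<nu> = {\<pi>. (\<forall>z. 0 \<le> \<pi> z) \<and>
      (\<forall>x. (\<Sum>x'\<in>UNIV. \<pi> (x, x')) \<le> \<mu> x) \<and>
      (\<forall>x'. (\<Sum>x\<in>UNIV. \<pi> (x, x')) \<le> \<nu> x')}"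

definition KR_cost :: "real \<Rightarrow> real \<Rightarrow> ('a::{metric_space,finite} \<Rightarrow> real) \<Rightarrow> ('a \<Rightarrow> real)
    \<Rightarrow> ('a \<times> 'a \<Rightarrow> real) \<Rightarrow> real" where
  "KR_cost p C \<mu> \<nu> \<pi> =
     (\<Sum>(x, x')\<in>UNIV. dist x x' powr p * \<pi> (x, x'))
     + C powr p * ((mass \<mu> + mass \<nu>) / 2 - mass \<pi>)"

text \<open>(p,C)-Kantorovich--Rubinstein distance (the minimum is attained, so Inf = min).\<close>
definition KR :: "real \<Rightarrow> real \<Rightarrow> ('a::{metric_space,finite} \<Rightarrow> real) \<Rightarrow> ('a \<Rightarrow> real) \<Rightarrow> real" where
  "KR p C \<mu> \<nu> = (INF \<pi>\<in>subcouplings \<mu> \<nu>. KR_cost p C \<mu> \<nu> \<pi>) powr (1 / p)"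

definition poi :: "real \<Rightarrow> nat pmf" where
  "poi r = (if 0 < r then poisson_pmf r else return_pmf 0)"

definition poisson_model :: "real \<Rightarrow> real \<Rightarrow> ('a::finite \<Rightarrow> real) \<Rightarrow> (('a \<Rightarrow> nat) \<times> ('a \<Rightarrow> bool)) pmf" where
  "poisson_model t s \<mu> =
     pair_pmf (Pi_pmf UNIV 0 (\<lambda>x. poi (t * \<mu> x))) (Pi_pmf UNIV False (\<lambda>x. bernoulli_pmf s))"

definition mu_hat :: "real \<Rightarrow> real \<Rightarrow> ('a \<Rightarrow> nat) \<times> ('a \<Rightarrow> bool) \<Rightarrow> 'a \<Rightarrow> real" where
  "mu_hat t s \<omega> x = (if snd \<omega> x then 1 else 0) * real (fst \<omega> x) / (s * t)"

end

theory Submission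
  imports Defs
begin

lemma nn_int_pmf_sums:
  fixes p :: "nat pmf"
  assumes "\<And>n. 0 \<le> f n" "(\<lambda>n. pmf p n * f n) sums S"
  shows "(\<integral>\<^sup>+n. ennreal (f n) \<partial>measure_pmf p) = ennreal S"
proof -
  have S0: "0 \<le> S"
    by (rule sums_le[OF _ sums_zero assms(2)]) (simp add: assms(1))
  have "(\<integral>\<^sup>+n. ennreal (f n) \<partial>measure_pmf p) = (\<integral>\<^sup>+n. ennreal (pmf p n) * ennreal (f n) \<partial>count_space UNIV)"
    by (rule nn_integral_measure_pmf)
  also have "\<dots> = (\<integral>\<^sup>+n. ennreal (pmf p n * f n) \<partial>count_space UNIV)"
    by (intro nn_integral_cong) (simp add: ennreal_mult assms(1))
  also have "\<dots> = (\<Sum>n. ennreal (pmf p n * f n))"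
    by (rule nn_integral_count_space_nat)
  also have "\<dots> = ennreal S"
    using assms S0 by (intro sums_unique[symmetric]) (simp add: sums_ennreal)
  finally show ?thesis .
qed

lemma poi_sums:
  fixes r :: real assumes r: "0 < r"
  defines "a \<equiv> \<lambda>k::nat. r ^ k / fact k * exp (-r)"
  shows "a sums 1" and "(\<lambda>k. real k * a k) sums r" and "(\<lambda>k. (real k)^2 * a k) sums (r*(r+1))"
proof -
  have e: "(\<lambda>k. r ^ k / fact k) sums exp r"
    using exp_converges[of r] by (simp add: divide_inverse mult.commute)
  have "(\<lambda>k. r ^ k / fact k * exp (-r)) sums (exp r * exp (-r))"
    by (rule sums_mult2[OF e])
  then show A: "a sums 1" by (simp add: a_def exp_minus)
  have sh: "real (Suc m) * a (Suc m) = r * a m" for m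
  proof -
    have "real (Suc m) * a (Suc m) = (real (Suc m) / real (Suc m)) * (r * (r ^ m / fact m * exp (-r)))"
      unfolding a_def fact_Suc of_nat_mult by (simp only: times_divide_eq_left times_divide_eq_right divide_divide_eq_left power_Suc mult_ac)
    thus ?thesis by (simp add: a_def)
  qed
  have "(\<lambda>m. real (Suc m) * a (Suc m)) sums (r * 1)"
    unfolding sh by (rule sums_mult[OF A])
  then show B: "(\<lambda>k. real k * a k) sums r" using sums_Suc_iff[of "\<lambda>k. real k * a k" r] by simp
  have sh2: "(real (Suc m))^2 * a (Suc m) = r * (real m * a m) + r * a m" for m
  proof -
    have "(real (Suc m))^2 * a (Suc m) = real (Suc m) * (real (Suc m) * a (Suc m))"
      by (simp add: power2_eq_square)
    also have "\<dots> = real (Suc m) * (r * a m)" by (simp only: sh)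
    finally show ?thesis by (simp add: algebra_simps)
  qed
  have "(\<lambda>m. (real (Suc m))^2 * a (Suc m)) sums (r * r + r * 1)"
    unfolding sh2 by (intro sums_add sums_mult B A)
  then show "(\<lambda>k. (real k)^2 * a k) sums (r*(r+1))" using sums_Suc_iff[of "\<lambda>k. (real k)^2 * a k" "r*(r+1)"] by (simp add: algebra_simps)
qed

lemma poi_mean: assumes "0 \<le> r"
  shows "(\<integral>\<^sup>+n. ennreal (real n) \<partial>measure_pmf (poi r)) = ennreal r"
proof (cases "r = 0")
  case True thus ?thesis by (simp add: poi_def)
next
  case False
  hence r: "0 < r" using assms by simp
  show ?thesis
    by (rule nn_int_pmf_sums) (use poi_sums(2)[OF r] r in \<open>auto simp: poi_def mult.commute\<close>)
qed

lemma poi_var: assumes "0 \<le> r"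
  shows "(\<integral>\<^sup>+n. ennreal ((real n - r)^2) \<partial>measure_pmf (poi r)) = ennreal r"
proof (cases "r = 0")
  case True thus ?thesis by (simp add: poi_def)
next
  case False
  hence r: "0 < r" using assms by simp
  define a where "a = (\<lambda>k::nat. r ^ k / fact k * exp (-r))"
  have s1: "a sums 1" "(\<lambda>k. real k * a k) sums r" "(\<lambda>k. (real k)^2 * a k) sums (r*(r+1))"
    using poi_sums[OF r] by (simp_all add: a_def)
  have "(\<lambda>k. (real k)^2 * a k - 2 * r * (real k * a k) + r^2 * a k) sums (r*(r+1) - 2*r*r + r^2*1)"
    by (intro sums_add sums_diff sums_mult s1)
  hence "(\<lambda>k. a k * (real k - r)^2) sums r"
    by (simp add: algebra_simps power2_eq_square)
  thus ?thesis
    by (intro nn_int_pmf_sums) (use r in \<open>auto simp: poi_def a_def\<close>)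
qed

lemma poi_abs: assumes "0 \<le> r"
  shows "(\<integral>\<^sup>+n. ennreal \<bar>real n - r\<bar> \<partial>measure_pmf (poi r)) \<le> ennreal (sqrt r)"
proof (cases "r = 0")
  case True thus ?thesis by (simp add: poi_def)
next
  case False
  hence r: "0 < r" using assms by simp
  have pt: "\<bar>y\<bar> \<le> (1/(2 * sqrt r)) * (y^2) + sqrt r / 2" for y
  proof -
    have "0 \<le> (\<bar>y\<bar> - sqrt r)^2" by simp
    hence "2 * sqrt r * \<bar>y\<bar> \<le> y^2 + r"
      using r by (simp add: power2_eq_square algebra_simps)
    thus ?thesis using r by (simp add: field_simps power2_eq_square)
  qed
  have "(\<integral>\<^sup>+n. ennreal \<bar>real n - r\<bar> \<partial>measure_pmf (poi r))
     \<le> (\<integral>\<^sup>+n. ennreal (1/(2 * sqrt r)) * ennreal ((real n - r)^2) + ennreal (sqrt r / 2) \<partial>measure_pmf (poi r))"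
    apply (intro nn_integral_mono)
    subgoal for n using pt[of "real n - r"] r
      by (simp add: ennreal_mult''[symmetric] ennreal_plus[symmetric] del: ennreal_plus)
    done
  also have "\<dots> = ennreal (1/(2 * sqrt r)) * ennreal r + ennreal (sqrt r / 2)"
    using r by (simp add: nn_integral_add nn_integral_cmult poi_var measure_pmf.emeasure_space_1)
  also have "\<dots> = ennreal (sqrt r)"
  proof -
    have "1/(2 * sqrt r) * r + sqrt r / 2 = sqrt r" using r
      by (simp add: field_simps)
    thus ?thesis using r by (simp add: ennreal_mult''[symmetric] ennreal_plus[symmetric] del: ennreal_plus)
  qed
  finally show ?thesis .
qed
lemma sum_UNIV_pair: "(\<Sum>z\<in>(UNIV::('a::finite \<times> 'a) set). g z) = (\<Sum>x\<in>UNIV. \<Sum>x'\<in>UNIV. g (x, x'))"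
  by (simp add: UNIV_Times_UNIV[symmetric] sum.cartesian_product del: UNIV_Times_UNIV)

lemma KR_le:
  fixes \<mu> \<nu> :: "'a::{metric_space,finite} \<Rightarrow> real"
  assumes nu: "\<And>x. 0 \<le> \<nu> x" and mu: "\<And>x. 0 \<le> \<mu> x" and p: "1 \<le> p" and C: "0 < C"
  shows "KR p C \<nu> \<mu> powr p \<le> C powr p / 2 * (\<Sum>x\<in>UNIV. \<bar>\<nu> x - \<mu> x\<bar>)"
proof -
  define \<pi>0 where "\<pi>0 = (\<lambda>(x::'a, x'). if x = x' then min (\<nu> x) (\<mu> x) else 0)"
  have row: "(\<Sum>x'\<in>UNIV. \<pi>0 (x, x')) = min (\<nu> x) (\<mu> x)" for x
    by (simp add: \<pi>0_def)
  have col: "(\<Sum>x\<in>UNIV. \<pi>0 (x, x')) = min (\<nu> x') (\<mu> x')" for x'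
    by (simp add: \<pi>0_def)
  have mem: "\<pi>0 \<in> subcouplings \<nu> \<mu>"
    unfolding subcouplings_def using nu mu
    by (auto simp: row col) (auto simp: \<pi>0_def)
  have d0: "(\<Sum>(x, x')\<in>UNIV. dist x x' powr p * \<pi>0 (x, x')) = 0"
    by (rule sum.neutral) (auto simp: \<pi>0_def)
  have m0: "mass \<pi>0 = (\<Sum>x\<in>UNIV. min (\<nu> x) (\<mu> x))"
    unfolding mass_def sum_UNIV_pair row ..
  have cost0: "KR_cost p C \<nu> \<mu> \<pi>0 = C powr p / 2 * (\<Sum>x\<in>UNIV. \<bar>\<nu> x - \<mu> x\<bar>)"
  proof -
    have "(mass \<nu> + mass \<mu>) / 2 - mass \<pi>0 = (\<Sum>x\<in>UNIV. (\<nu> x + \<mu> x) / 2 - min (\<nu> x) (\<mu> x))"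
      unfolding m0 by (simp add: mass_def sum_subtractf sum.distrib sum_divide_distrib[symmetric])
    also have "\<dots> = (\<Sum>x\<in>UNIV. \<bar>\<nu> x - \<mu> x\<bar> / 2)"
      by (intro sum.cong) (auto simp: min_def)
    also have "\<dots> = (\<Sum>x\<in>UNIV. \<bar>\<nu> x - \<mu> x\<bar>) / 2"
      by (simp add: sum_divide_distrib)
    finally have "(mass \<nu> + mass \<mu>) / 2 - mass \<pi>0 = (\<Sum>x\<in>UNIV. \<bar>\<nu> x - \<mu> x\<bar>) / 2" .
    thus ?thesis unfolding KR_cost_def d0 by simp
  qed
  have lb: "0 \<le> KR_cost p C \<nu> \<mu> \<pi>" if "\<pi> \<in> subcouplings \<nu> \<mu>" for \<pi>
  proof -
    from that have pn: "\<And>z. 0 \<le> \<pi> z" and r: "\<And>x. (\<Sum>x'\<in>UNIV. \<pi> (x, x')) \<le> \<nu> x"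
      and c: "\<And>x'. (\<Sum>x\<in>UNIV. \<pi> (x, x')) \<le> \<mu> x'"
      by (auto simp: subcouplings_def)
    have "mass \<pi> \<le> mass \<nu>" unfolding mass_def sum_UNIV_pair by (intro sum_mono r)
    moreover have "mass \<pi> \<le> mass \<mu>"
      unfolding mass_def sum_UNIV_pair by (subst sum.swap) (intro sum_mono c)
    ultimately have "0 \<le> (mass \<nu> + mass \<mu>) / 2 - mass \<pi>" by simp
    moreover have "0 \<le> (\<Sum>(x, x')\<in>UNIV. dist x x' powr p * \<pi> (x, x'))"
      by (intro sum_nonneg) (auto intro!: mult_nonneg_nonneg pn)
    ultimately show ?thesis unfolding KR_cost_def using C by simp
  qed
  define I where "I = (INF \<pi>\<in>subcouplings \<nu> \<mu>. KR_cost p C \<nu> \<mu> \<pi>)"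
  have I0: "0 \<le> I" unfolding I_def using mem lb by (intro cINF_greatest) auto
  have I1: "I \<le> KR_cost p C \<nu> \<mu> \<pi>0" unfolding I_def
    by (rule cINF_lower[OF _ mem]) (use lb in \<open>auto intro!: bdd_belowI2\<close>)
  have "KR p C \<nu> \<mu> powr p = I"
    unfolding KR_def I_def[symmetric] powr_powr using p I0 by (simp add: powr_one)
  thus ?thesis using I1 cost0 by simp
qed

lemma core_ineq:
  fixes u A B :: real
  assumes "0 \<le> B" "B \<le> u" "0 \<le> A"
  shows "\<bar>u - A\<bar> \<le> u - B + \<bar>B - A\<bar>"
  using assms by (auto simp: abs_if)

lemma point_ineq:
  fixes y m s t :: real
  assumes y: "0 \<le> y" and m: "0 \<le> m" and s: "0 < s" "s \<le> 1" and t: "0 < t"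
  shows "s * \<bar>y / (s * t) - m\<bar> + (1 - s) * m \<le> (1 - s) / t * y + (1 - s) * m + s / t * \<bar>y - t * m\<bar>"
proof -
  define u where "u = y / t"
  have u: "0 \<le> u" using y t by (simp add: u_def)
  have e1: "s * \<bar>y / (s * t) - m\<bar> = \<bar>u - s * m\<bar>"
  proof -
    have "y / (s * t) - m = (u - s * m) / s" using s t by (simp add: u_def field_simps)
    thus ?thesis using s by (simp add: abs_divide)
  qed
  have e2: "s / t * \<bar>y - t * m\<bar> = \<bar>s * u - s * m\<bar>"
  proof -
    have "s * u - s * m = s / t * (y - t * m)" using t by (simp add: u_def field_simps)
    thus ?thesis using s t by (simp add: abs_mult)
  qed
  have e3: "(1 - s) / t * y = u - s * u" using t by (simp add: u_def field_simps)
  have "\<bar>u - s * m\<bar> \<le> u - s * u + \<bar>s * u - s * m\<bar>"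
    by (rule core_ineq) (use u s m in \<open>auto intro: mult_left_le_one_le\<close>)
  thus ?thesis unfolding e1 e2 e3 by simp
qed

lemma ennreal_3:
  fixes a b c d e :: real
  assumes "0 \<le> a" "0 \<le> b" "0 \<le> c" "0 \<le> d" "0 \<le> e"
  shows "ennreal (a * b + c + d * e) = ennreal a * ennreal b + ennreal c + ennreal d * ennreal e"
  using assms by (simp add: ennreal_mult)

lemma per_x:
  fixes \<mu> :: "'a::finite \<Rightarrow> real"
  assumes mu: "\<forall>x. 0 \<le> \<mu> x" and t: "0 < t" and s: "0 < s" "s \<le> 1"
  shows "(\<integral>\<^sup>+\<omega>. ennreal \<bar>mu_hat t s \<omega> x - \<mu> x\<bar> \<partial>measure_pmf (poisson_model t s \<mu>))
     \<le> ennreal (2 * (1 - s) * \<mu> x + s / sqrt t * sqrt (\<mu> x))"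
proof -
  define A where "A = Pi_pmf (UNIV::'a set) 0 (\<lambda>x. poi (t * \<mu> x))"
  define B where "B = Pi_pmf (UNIV::'a set) False (\<lambda>x. bernoulli_pmf s)"
  define h where "h = (\<lambda>(n::nat) (b::bool). ennreal \<bar>(if b then 1 else 0) * real n / (s * t) - \<mu> x\<bar>)"
  define m where "m = \<mu> x"
  have m: "0 \<le> m" using mu by (simp add: m_def)
  have tm: "0 \<le> t * m" using t m by simp
  have "(\<integral>\<^sup>+\<omega>. ennreal \<bar>mu_hat t s \<omega> x - \<mu> x\<bar> \<partial>measure_pmf (poisson_model t s \<mu>))
      = (\<integral>\<^sup>+f. \<integral>\<^sup>+g. h (f x) (g x) \<partial>B \<partial>A)"
    unfolding poisson_model_def nn_integral_pair_pmf' A_def B_def h_def mu_hat_def by simp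
  also have "\<dots> = (\<integral>\<^sup>+f. \<integral>\<^sup>+b. h (f x) b \<partial>bernoulli_pmf s \<partial>A)"
  proof -
    have mB: "map_pmf (\<lambda>g. g x) B = bernoulli_pmf s" by (simp add: B_def Pi_pmf_component)
    have "(\<integral>\<^sup>+g. h n (g x) \<partial>B) = (\<integral>\<^sup>+b. h n b \<partial>bernoulli_pmf s)" for n
      using arg_cong[OF mB, of "\<lambda>M. \<integral>\<^sup>+b. h n b \<partial>measure_pmf M"] by simp
    thus ?thesis by simp
  qed
  also have "\<dots> = (\<integral>\<^sup>+n. \<integral>\<^sup>+b. h n b \<partial>bernoulli_pmf s \<partial>poi (t * m))"
  proof -
    have mA: "map_pmf (\<lambda>f. f x) A = poi (t * m)" by (simp add: A_def Pi_pmf_component m_def)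
    show ?thesis
      using arg_cong[OF mA, of "\<lambda>M. \<integral>\<^sup>+n. \<integral>\<^sup>+b. h n b \<partial>bernoulli_pmf s \<partial>measure_pmf M"] by simp
  qed
  also have "\<dots> = (\<integral>\<^sup>+n. ennreal (s * \<bar>real n / (s * t) - m\<bar> + (1 - s) * m) \<partial>poi (t * m))"
  proof (intro nn_integral_cong)
    fix n :: nat
    have "(\<integral>\<^sup>+b. h n b \<partial>bernoulli_pmf s) = h n True * ennreal s + h n False * ennreal (1 - s)"
      using s by simp
    also have "\<dots> = ennreal (\<bar>real n / (s * t) - m\<bar> * s + m * (1 - s))"
      using s m by (simp add: h_def m_def ennreal_mult)
    finally show "(\<integral>\<^sup>+b. h n b \<partial>bernoulli_pmf s) = ennreal (s * \<bar>real n / (s * t) - m\<bar> + (1 - s) * m)"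
      by (simp add: mult.commute)
  qed
  also have "\<dots> \<le> (\<integral>\<^sup>+n. ennreal ((1 - s) / t) * ennreal (real n) + ennreal ((1 - s) * m)
        + ennreal (s / t) * ennreal \<bar>real n - t * m\<bar> \<partial>poi (t * m))"
  proof (intro nn_integral_mono)
    fix n :: nat
    have "ennreal (s * \<bar>real n / (s * t) - m\<bar> + (1 - s) * m)
        \<le> ennreal ((1 - s) / t * real n + (1 - s) * m + s / t * \<bar>real n - t * m\<bar>)"
      by (intro ennreal_leI point_ineq) (use m s t in auto)
    also have "\<dots> = ennreal ((1 - s) / t) * ennreal (real n) + ennreal ((1 - s) * m)
        + ennreal (s / t) * ennreal \<bar>real n - t * m\<bar>"
      by (rule ennreal_3) (use s t m in auto)
    finally show "ennreal (s * \<bar>real n / (s * t) - m\<bar> + (1 - s) * m)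
        \<le> ennreal ((1 - s) / t) * ennreal (real n) + ennreal ((1 - s) * m)
        + ennreal (s / t) * ennreal \<bar>real n - t * m\<bar>" .
  qed
  also have "\<dots> = ennreal ((1 - s) / t) * ennreal (t * m) + ennreal ((1 - s) * m)
        + ennreal (s / t) * (\<integral>\<^sup>+n. ennreal \<bar>real n - t * m\<bar> \<partial>poi (t * m))"
    by (simp add: nn_integral_add nn_integral_cmult poi_mean[OF tm] measure_pmf.emeasure_space_1)
  also have "\<dots> \<le> ennreal ((1 - s) / t) * ennreal (t * m) + ennreal ((1 - s) * m)
        + ennreal (s / t) * ennreal (sqrt (t * m))"
    by (intro add_left_mono mult_left_mono poi_abs[OF tm]) simp
  also have "\<dots> = ennreal (2 * (1 - s) * \<mu> x + s / sqrt t * sqrt (\<mu> x))"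
  proof -
    have "(1 - s) / t * (t * m) + (1 - s) * m + s / t * sqrt (t * m) = 2 * (1 - s) * m + s / sqrt t * sqrt m"
    proof -
      have st: "sqrt t * sqrt t = t" using t by simp
      have "s / t * sqrt (t * m) = s / (sqrt t * sqrt t) * (sqrt t * sqrt m)"
        by (simp only: st real_sqrt_mult)
      also have "\<dots> = s / sqrt t * sqrt m"
        using t by (simp add: divide_simps)
      finally have "s / t * sqrt (t * m) = s / sqrt t * sqrt m" .
      thus ?thesis using t by (simp add: field_simps)
    qed
    moreover have "ennreal ((1 - s) / t) * ennreal (t * m) + ennreal ((1 - s) * m)
        + ennreal (s / t) * ennreal (sqrt (t * m)) = ennreal ((1 - s) / t * (t * m) + (1 - s) * m + s / t * sqrt (t * m))"
      by (rule ennreal_3[symmetric]) (use s t m in auto)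
    ultimately show ?thesis by (simp only: m_def)
  qed
  finally show ?thesis .
qed

theorem lemma2p4:
  fixes \<mu> :: "'a::{metric_space,finite} \<Rightarrow> real"
    and t s p C :: real
  assumes "\<forall>x. 0 \<le> \<mu> x"
    and "0 < t" and "0 < s" and "s \<le> 1"
    and "1 \<le> p" and "0 < C"
  shows "(\<integral>\<^sup>+\<omega>. ennreal (KR p C (mu_hat t s \<omega>) \<mu> powr p) \<partial>measure_pmf (poisson_model t s \<mu>))
         \<le> ennreal (C powr p / 2 * (2 * (1 - s) * mass \<mu> + s / sqrt t * (\<Sum>x\<in>UNIV. sqrt (\<mu> x))))"
proof -
  note mu = assms(1) and t = assms(2) and s = assms(3,4) and p = assms(5) and C = assms(6)
  let ?M = "measure_pmf (poisson_model t s \<mu>)"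
  have nn: "0 \<le> mu_hat t s \<omega> x" for \<omega> x
    using s t by (simp add: mu_hat_def)
  have "(\<integral>\<^sup>+\<omega>. ennreal (KR p C (mu_hat t s \<omega>) \<mu> powr p) \<partial>?M)
      \<le> (\<integral>\<^sup>+\<omega>. ennreal (C powr p / 2) * (\<Sum>x\<in>UNIV. ennreal \<bar>mu_hat t s \<omega> x - \<mu> x\<bar>) \<partial>?M)"
  proof (intro nn_integral_mono)
    fix \<omega>
    have "ennreal (KR p C (mu_hat t s \<omega>) \<mu> powr p)
        \<le> ennreal (C powr p / 2 * (\<Sum>x\<in>UNIV. \<bar>mu_hat t s \<omega> x - \<mu> x\<bar>))"
      by (intro ennreal_leI KR_le nn) (use mu p C in auto)
    also have "\<dots> = ennreal (C powr p / 2) * (\<Sum>x\<in>UNIV. ennreal \<bar>mu_hat t s \<omega> x - \<mu> x\<bar>)"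
    proof -
      have e: "(\<Sum>x\<in>UNIV. ennreal \<bar>mu_hat t s \<omega> x - \<mu> x\<bar>) = ennreal (\<Sum>x\<in>UNIV. \<bar>mu_hat t s \<omega> x - \<mu> x\<bar>)"
        by simp
      show ?thesis unfolding e by (rule ennreal_mult) (auto intro: sum_nonneg)
    qed
    finally show "ennreal (KR p C (mu_hat t s \<omega>) \<mu> powr p)
        \<le> ennreal (C powr p / 2) * (\<Sum>x\<in>UNIV. ennreal \<bar>mu_hat t s \<omega> x - \<mu> x\<bar>)" .
  qed
  also have "\<dots> = ennreal (C powr p / 2) * (\<Sum>x\<in>UNIV. \<integral>\<^sup>+\<omega>. ennreal \<bar>mu_hat t s \<omega> x - \<mu> x\<bar> \<partial>?M)"
    by (simp add: nn_integral_cmult nn_integral_sum del: sum_ennreal)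
  also have "\<dots> \<le> ennreal (C powr p / 2) * (\<Sum>x\<in>UNIV. ennreal (2 * (1 - s) * \<mu> x + s / sqrt t * sqrt (\<mu> x)))"
    by (intro mult_left_mono sum_mono per_x) (use mu t s in auto)
  also have "\<dots> = ennreal (C powr p / 2 * (2 * (1 - s) * mass \<mu> + s / sqrt t * (\<Sum>x\<in>UNIV. sqrt (\<mu> x))))"
  proof -
    have nn2: "0 \<le> 2 * (1 - s) * \<mu> x + s / sqrt t * sqrt (\<mu> x)" for x
      using mu s t by (intro add_nonneg_nonneg mult_nonneg_nonneg) auto
    have "(\<Sum>x\<in>UNIV. 2 * (1 - s) * \<mu> x + s / sqrt t * sqrt (\<mu> x))
        = 2 * (1 - s) * mass \<mu> + s / sqrt t * (\<Sum>x\<in>UNIV. sqrt (\<mu> x))"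
      by (simp add: mass_def sum.distrib sum_distrib_left)
    moreover have "0 \<le> (\<Sum>x\<in>UNIV. 2 * (1 - s) * \<mu> x + s / sqrt t * sqrt (\<mu> x))"
      by (intro sum_nonneg nn2)
    ultimately show ?thesis
      using nn2 by (simp add: ennreal_mult[symmetric])
  qed
  finally show ?thesis .
qed
end
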